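(* Let $H$ be a real Hilbert space, $C\subset H$ a nonempty closed convex set, and $A,F:H\to H$ operators. (a) Assume that the couple $(A,F)$ is $\gamma$-strongly monotone for some $\gamma>0$, and that $x^*$ is a solution of $\mathrm{GVI}(A,F,C)$. Then for all $f\in C$ and all $y\in H$, $$\langle Fy-f,\,Ay-Ax^*\rangle+\langle f-Fx^*,\,Ay\rangle\ \ge\ \gamma\|y-x^*\|^2 .$$ (b) Assume that the couple $(A,F)$ is monotone. Then $x^*\in H$ is a solution of $\mathrm{GVI}(A,F,C)$ if and only if $Fx^*\in C$ and $$\langle Ay-Ax^*,\,Fy-f\rangle+\langle Ay,\,f-Fx^*\rangle\ \ge\ 0\qquad\text{for all } y\in H,\ f\in C.$$
   Context: The general variational inequality $\mathrm{GVI}(A,F,C)$ is the problem: find $x^*\in H$ such that $Fx^*\in C$ and $\langle Ax^*,y-Fx^*\rangle\ge 0$ for all $y\in C$. A couple $(A,F)$ of operators $H\to H$ is called $\gamma$-strongly monotone ($\gamma>0$) if $\langle Ax-Ay,Fx-Fy\rangle\ge\gamma\|x-y\|^2$ for all $x,y\in H$, and monotone if $\langle Ax-Ay,Fx-Fy\rangle\ge 0$ for all $x,y\in H$. *)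

theory Defs
  imports "HOL-Analysis.Analysis"
begin

definition GVI :: "('a::real_inner \<Rightarrow> 'a) \<Rightarrow> ('a \<Rightarrow> 'a) \<Rightarrow> 'a set \<Rightarrow> 'a \<Rightarrow> bool" where
  "GVI A F C x \<longleftrightarrow> F x \<in> C \<and> (\<forall>y\<in>C. inner (A x) (y - F x) \<ge> 0)"

definition strongly_monotone_couple :: "('a::real_inner \<Rightarrow> 'a) \<Rightarrow> ('a \<Rightarrow> 'a) \<Rightarrow> real \<Rightarrow> bool" where
  "strongly_monotone_couple A F \<gamma> \<longleftrightarrow>
     (\<forall>x y. inner (A x - A y) (F x - F y) \<ge> \<gamma> * (norm (x - y))\<^sup>2)"

definition monotone_couple :: "('a::real_inner \<Rightarrow> 'a) \<Rightarrow> ('a \<Rightarrow> 'a) \<Rightarrow> bool" where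
  "monotone_couple A F \<longleftrightarrow> (\<forall>x y. inner (A x - A y) (F x - F y) \<ge> 0)"

end

theory Submission
  imports Defs
begin

lemma key_id:
  fixes a ax fy fx f :: "'a::real_inner"
  shows "inner (fy - f) (a - ax) + inner (f - fx) a = inner (a - ax) (fy - fx) + inner (f - fx) ax"
  by (simp add: inner_diff_left inner_diff_right inner_commute[of fy] inner_commute[of fx] inner_commute[of f] algebra_simps)

theorem lemma1p1:
  fixes A F :: "'a::{real_inner, complete_space} \<Rightarrow> 'a" and C :: "'a set"
  assumes "C \<noteq> {}" and "closed C" and "convex C"
  shows "(\<forall>\<gamma> x. \<gamma> > 0 \<longrightarrow> strongly_monotone_couple A F \<gamma> \<longrightarrow> GVI A F C x \<longrightarrow>
           (\<forall>f\<in>C. \<forall>y. inner (F y - f) (A y - A x) + inner (f - F x) (A y)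
                        \<ge> \<gamma> * (norm (y - x))\<^sup>2))
         \<and> (monotone_couple A F \<longrightarrow> (\<forall>x. GVI A F C x \<longleftrightarrow>
           (F x \<in> C \<and> (\<forall>y. \<forall>f\<in>C. inner (A y - A x) (F y - f) + inner (A y) (f - F x) \<ge> 0))))"
proof (intro conjI)
  show "\<forall>\<gamma> x. \<gamma> > 0 \<longrightarrow> strongly_monotone_couple A F \<gamma> \<longrightarrow> GVI A F C x \<longrightarrow>
           (\<forall>f\<in>C. \<forall>y. inner (F y - f) (A y - A x) + inner (f - F x) (A y)
                        \<ge> \<gamma> * (norm (y - x))\<^sup>2)"
  proof (intro allI impI ballI)
  fix \<gamma> x f y
  assume sm: "strongly_monotone_couple A F \<gamma>" and g: "GVI A F C x" and f: "f \<in> C"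
  have 1: "inner (A x) (f - F x) \<ge> 0" using g f by (simp add: GVI_def)
  have 2: "inner (A y - A x) (F y - F x) \<ge> \<gamma> * (norm (y - x))\<^sup>2" using sm by (simp add: strongly_monotone_couple_def)
  show "inner (F y - f) (A y - A x) + inner (f - F x) (A y) \<ge> \<gamma> * (norm (y - x))\<^sup>2"
    using 1 2 key_id[of "F y" f "A y" "A x" "F x"] by (simp add: inner_commute)
  qed
next
  show "monotone_couple A F \<longrightarrow> (\<forall>x. GVI A F C x \<longleftrightarrow>
           (F x \<in> C \<and> (\<forall>y. \<forall>f\<in>C. inner (A y - A x) (F y - f) + inner (A y) (f - F x) \<ge> 0)))"
  proof (intro impI allI iffI)
  fix x
  assume m: "monotone_couple A F" and g: "GVI A F C x"
  show "F x \<in> C \<and> (\<forall>y. \<forall>f\<in>C. inner (A y - A x) (F y - f) + inner (A y) (f - F x) \<ge> 0)"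
  proof (intro conjI allI ballI)
    show "F x \<in> C" using g by (simp add: GVI_def)
    fix y f assume f: "f \<in> C"
    have 1: "inner (A x) (f - F x) \<ge> 0" using g f by (simp add: GVI_def)
    have 2: "inner (A y - A x) (F y - F x) \<ge> 0" using m by (simp add: monotone_couple_def)
    show "inner (A y - A x) (F y - f) + inner (A y) (f - F x) \<ge> 0"
      using 1 2 key_id[of "F y" f "A y" "A x" "F x"] by (simp add: inner_commute)
  qed
next
  fix x
  assume h: "F x \<in> C \<and> (\<forall>y. \<forall>f\<in>C. inner (A y - A x) (F y - f) + inner (A y) (f - F x) \<ge> 0)"
  show "GVI A F C x" unfolding GVI_def
  proof (intro conjI ballI)
    show "F x \<in> C" using h by simp
    fix f assume "f \<in> C"
    then show "inner (A x) (f - F x) \<ge> 0" using h by (metis diff_self inner_zero_left add_0)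
  qed
  qed
qed

end
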